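(* Let $\mathcal{H},\mathcal{H}'$ be real Hilbert spaces, $(\varphi_\gamma)_{\gamma\in\Gamma}$ an orthonormal basis of $\mathcal{H}$, $K:\mathcal{H}\to\mathcal{H}'$ bounded linear with $\|K\|<1$, $g\in\mathcal{H}'$, $\Gamma=\Gamma_1\cup\dots\cup\Gamma_n$ pairwise disjoint, $p_i\in[1,2]$, $p_\gamma=p_i$ for $\gamma\in\Gamma_i$, weights $w_\gamma\ge c>0$. Let $\mathbf{S}_{W,P}(h)=\sum_\gamma S_{w_\gamma,p_\gamma}(\langle h,\varphi_\gamma\rangle)\varphi_\gamma$, $\mathbf{T}(f)=\mathbf{S}_{W,P}(f+K^*(g-Kf))$, $f^0\in\mathcal{H}$, $f^k=\mathbf{T}(f^{k-1})$, let $f^*$ be the weak limit of $(f^k)$, and put $u^k=f^k-f^*$, $h=f^*+K^*(g-Kf^* )$. Then: (A) $\|Ku^k\|\to0$; (B) $\|\mathbf{S}_{W,P}(h+u^k)-\mathbf{S}_{W,P}(h)-u^k\|\to0$; (C) if $a\in\mathcal{H}$ and $(v^k)$ is a sequence in $\mathcal{H}$ with $v^k\to0$ weakly and $\|\mathbf{S}_{W,P}(a+v^k)-\mathbf{S}_{W,P}(a)-v^k\|\to0$, then $\|v^k\|\to0$; (D) $\|u^k\|\to0$, i.e. $f^k\to f^*$ in norm.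
   Context: For $c>0$, $p\ge1$: $S_{c,p}(t)=F_{c,p}^{-1}(t)$ if $p>1$, with $F_{c,p}(t)=t+\frac{cp}2\operatorname{sign}(t)|t|^{p-1}$; $S_{c,1}(t)=t-\frac c2$ if $t>\frac c2$, $0$ if $|t|\le\frac c2$, $t+\frac c2$ if $t<-\frac c2$. It is known under these hypotheses that $(f^k)$ converges weakly to some $f^*\in\mathcal{H}$. All limits are as $k\to\infty$. *)

theory Defs
  imports "HOL-Analysis.Analysis"
begin

definition Fcp :: "real \<Rightarrow> real \<Rightarrow> real \<Rightarrow> real" where
  "Fcp c p t = t + (c * p / 2) * sgn t * \<bar>t\<bar> powr (p - 1)"

definition Scp :: "real \<Rightarrow> real \<Rightarrow> real \<Rightarrow> real" where
  "Scp c p t =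
     (if p = 1 then
        (if t > c / 2 then t - c / 2 else if t < - (c / 2) then t + c / 2 else 0)
      else (THE s. Fcp c p s = t))"

definition orthonormal_basis :: "('i \<Rightarrow> 'a::real_inner) \<Rightarrow> bool" where
  "orthonormal_basis \<phi> \<longleftrightarrow>
     (\<forall>i j. inner (\<phi> i) (\<phi> j) = (if i = j then 1 else 0)) \<and>
     closure (span (range \<phi>)) = UNIV"

definition SWP :: "('i \<Rightarrow> 'a::real_inner) \<Rightarrow> ('i \<Rightarrow> real) \<Rightarrow> ('i \<Rightarrow> real) \<Rightarrow> 'a \<Rightarrow> 'a" where
  "SWP \<phi> w p h = infsum (\<lambda>\<gamma>. Scp (w \<gamma>) (p \<gamma>) (inner h (\<phi> \<gamma>)) *\<^sub>R \<phi> \<gamma>) UNIV"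

definition weakly_converges :: "(nat \<Rightarrow> 'a::real_inner) \<Rightarrow> 'a \<Rightarrow> bool" where
  "weakly_converges x l \<longleftrightarrow> (\<forall>y. (\<lambda>k. inner (x k) y) \<longlonglongrightarrow> inner l y)"

end

theory Submission
  imports Defs
begin

lemma onb_inner:
  assumes "orthonormal_basis \<phi>" shows "inner (\<phi> i) (\<phi> j) = (if i = j then 1 else 0)"
  using assms unfolding orthonormal_basis_def by blast

lemma onb_closure:
  assumes "orthonormal_basis \<phi>" shows "closure (span (range \<phi>)) = UNIV"
  using assms unfolding orthonormal_basis_def by blast

lemma onb_inj:
  assumes "orthonormal_basis \<phi>" shows "inj \<phi>"
proof (rule injI)
  fix i j assume "\<phi> i = \<phi> j"
  then have "inner (\<phi> i) (\<phi> j) = 1" using onb_inner[OF assms, of j j] by simp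
  then show "i = j" using onb_inner[OF assms, of i j] by (auto split: if_splits)
qed

lemma onb_sum_inner:
  assumes "orthonormal_basis \<phi>" "finite W"
  shows "inner (\<Sum>\<gamma>\<in>W. d \<gamma> *\<^sub>R \<phi> \<gamma>) (\<phi> \<delta>) = (if \<delta> \<in> W then d \<delta> else 0)"
  using assms(2) by (simp add: inner_sum_left onb_inner[OF assms(1)] if_distrib cong: if_cong)

lemma onb_sum_norm:
  assumes "orthonormal_basis \<phi>" "finite W"
  shows "(norm (\<Sum>\<gamma>\<in>W. d \<gamma> *\<^sub>R \<phi> \<gamma>))^2 = (\<Sum>\<gamma>\<in>W. (d \<gamma>)^2)"
proof -
  have "(norm (\<Sum>\<gamma>\<in>W. d \<gamma> *\<^sub>R \<phi> \<gamma>))^2 = inner (\<Sum>\<gamma>\<in>W. d \<gamma> *\<^sub>R \<phi> \<gamma>) (\<Sum>\<gamma>\<in>W. d \<gamma> *\<^sub>R \<phi> \<gamma>)"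
    by (simp add: power2_norm_eq_inner)
  also have "\<dots> = (\<Sum>\<delta>\<in>W. d \<delta> * inner (\<Sum>\<gamma>\<in>W. d \<gamma> *\<^sub>R \<phi> \<gamma>) (\<phi> \<delta>))"
    by (simp add: inner_sum_right)
  also have "\<dots> = (\<Sum>\<gamma>\<in>W. (d \<gamma>)^2)"
    using assms by (simp add: onb_sum_inner power2_eq_square)
  finally show ?thesis .
qed

lemma onb_bessel:
  assumes "orthonormal_basis \<phi>" "finite F"
  shows "(\<Sum>\<gamma>\<in>F. (inner x (\<phi> \<gamma>))^2) \<le> (norm x)^2"
proof -
  define y where "y = (\<Sum>\<gamma>\<in>F. inner x (\<phi> \<gamma>) *\<^sub>R \<phi> \<gamma>)"
  have xy: "inner x y = (\<Sum>\<gamma>\<in>F. (inner x (\<phi> \<gamma>))^2)"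
    unfolding y_def by (simp add: inner_sum_right power2_eq_square)
  have yy: "(norm y)^2 = (\<Sum>\<gamma>\<in>F. (inner x (\<phi> \<gamma>))^2)"
    unfolding y_def using onb_sum_norm[OF assms] by simp
  have "0 \<le> (norm (x - y))^2" by simp
  also have "\<dots> = (norm x)^2 - 2 * inner x y + (norm y)^2"
    by (simp add: power2_norm_eq_inner inner_diff_left inner_diff_right inner_commute)
  finally show ?thesis using xy yy by simp
qed

lemma summable_on_cauchy_crit:
  fixes f :: "'i \<Rightarrow> 'a::{real_normed_vector, complete_space}"
  assumes "\<And>e. e > 0 \<Longrightarrow> \<exists>X. finite X \<and> (\<forall>Y. finite Y \<and> X \<inter> Y = {} \<longrightarrow> norm (sum f Y) < e)"
  shows "f summable_on UNIV"
proof -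
  have "\<exists>P. eventually P (finite_subsets_at_top UNIV) \<and>
              (\<forall>F F'. P F \<and> P F' \<longrightarrow> dist (sum f F) (sum f F') < e)" if "e > 0" for e
  proof -
    obtain X where X: "finite X" "\<And>Y. finite Y \<Longrightarrow> X \<inter> Y = {} \<Longrightarrow> norm (sum f Y) < e/2"
      using assms[of "e/2"] \<open>e > 0\<close> by auto
    define P where "P F \<longleftrightarrow> finite F \<and> X \<subseteq> F" for F
    have "eventually P (finite_subsets_at_top UNIV)"
      unfolding eventually_finite_subsets_at_top P_def using X(1) by blast
    moreover have "dist (sum f F) (sum f F') < e" if "P F" "P F'" for F F'
    proof -
      have F: "sum f F = sum f X + sum f (F - X)"
        using that unfolding P_def by (simp add: sum.subset_diff[of X] add.commute)
      have F': "sum f F' = sum f X + sum f (F' - X)"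
        using that unfolding P_def by (simp add: sum.subset_diff[of X] add.commute)
      have "dist (sum f F) (sum f F') = norm (sum f (F - X) - sum f (F' - X))"
        by (simp add: F F' dist_norm)
      also have "\<dots> \<le> norm (sum f (F - X)) + norm (sum f (F' - X))"
        by (rule norm_triangle_ineq4)
      also have "\<dots> < e/2 + e/2"
        using X(2)[of "F - X"] X(2)[of "F' - X"] that unfolding P_def
        by (intro add_strict_mono) auto
      finally show ?thesis by simp
    qed
    ultimately show ?thesis by blast
  qed
  then have "cauchy_filter (filtermap (sum f) (finite_subsets_at_top UNIV))"
    by (simp add: cauchy_filter_metric_filtermap)
  moreover have "complete (UNIV::'a set)"
    by (meson Cauchy_convergent UNIV_I complete_def convergent_def)
  ultimately obtain L' where "(sum f \<longlongrightarrow> L') (finite_subsets_at_top UNIV)"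
    using complete_uniform[where S=UNIV] by (force simp add: filterlim_def)
  then show ?thesis
    using summable_on_def has_sum_def by blast
qed

lemma nonneg_tail_small:
  fixes d :: "'i \<Rightarrow> real"
  assumes "d summable_on UNIV" "\<And>x. d x \<ge> 0" "e > 0"
  shows "\<exists>X. finite X \<and> (\<forall>Y. finite Y \<and> X \<inter> Y = {} \<longrightarrow> sum d Y < e)"
proof -
  obtain L where L: "(d has_sum L) UNIV" using assms(1) summable_on_def by blast
  have "eventually (\<lambda>F. dist (sum d F) L < e) (finite_subsets_at_top UNIV)"
    using L unfolding has_sum_def by (rule tendstoD) (rule assms(3))
  then obtain X where X1: "finite X" and X2: "\<forall>Y. finite Y \<and> X \<subseteq> Y \<and> Y \<subseteq> UNIV \<longrightarrow> dist (sum d Y) L < e"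
    unfolding eventually_finite_subsets_at_top by blast
  have le: "sum d F \<le> L" if "finite F" for F
    using has_sum_mono_neutral[OF has_sum_finite[OF that] L] assms(2) by auto
  have "sum d Y < e" if Y: "finite Y" "X \<inter> Y = {}" for Y
  proof -
    have "sum d (X \<union> Y) = sum d X + sum d Y" using Y X1 by (simp add: sum.union_disjoint)
    moreover have "sum d (X \<union> Y) \<le> L" using le Y X1 by simp
    moreover have "dist (sum d X) L < e" using X1 X2 by blast
    ultimately show "sum d Y < e" unfolding dist_real_def by linarith
  qed
  then show ?thesis using X1 by blast
qed

lemma onb_summable:
  fixes \<phi> :: "'i \<Rightarrow> 'a::{real_inner, complete_space}"
  assumes onb: "orthonormal_basis \<phi>" and sq: "(\<lambda>\<gamma>. (d \<gamma>)^2) summable_on UNIV"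
  shows "(\<lambda>\<gamma>. d \<gamma> *\<^sub>R \<phi> \<gamma>) summable_on UNIV"
proof (rule summable_on_cauchy_crit)
  fix e :: real assume e: "e > 0"
  have e2: "e^2 > 0" using e by simp
  obtain X where X1: "finite X" and X2: "\<forall>Y. finite Y \<and> X \<inter> Y = {} \<longrightarrow> (\<Sum>\<gamma>\<in>Y. (d \<gamma>)^2) < e^2"
    using nonneg_tail_small[OF sq zero_le_power2 e2] by blast
  have "norm (\<Sum>\<gamma>\<in>Y. d \<gamma> *\<^sub>R \<phi> \<gamma>) < e" if Y: "finite Y" "X \<inter> Y = {}" for Y
  proof -
    have "(norm (\<Sum>\<gamma>\<in>Y. d \<gamma> *\<^sub>R \<phi> \<gamma>))^2 = (\<Sum>\<gamma>\<in>Y. (d \<gamma>)^2)"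
      by (rule onb_sum_norm[OF onb Y(1)])
    also have "\<dots> < e^2" using X2 Y by blast
    finally have "(norm (\<Sum>\<gamma>\<in>Y. d \<gamma> *\<^sub>R \<phi> \<gamma>))^2 < e^2" .
    then show ?thesis by (rule power_less_imp_less_base) (use e in simp)
  qed
  then show "\<exists>X. finite X \<and> (\<forall>Y. finite Y \<and> X \<inter> Y = {} \<longrightarrow> norm (\<Sum>\<gamma>\<in>Y. d \<gamma> *\<^sub>R \<phi> \<gamma>) < e)"
    using X1 by blast
qed

lemma onb_has_sum_inner:
  assumes onb: "orthonormal_basis \<phi>" and hs: "((\<lambda>\<gamma>. d \<gamma> *\<^sub>R \<phi> \<gamma>) has_sum S) UNIV"
  shows "inner S (\<phi> \<delta>) = d \<delta>"
proof -
  have "((\<lambda>\<gamma>. inner (d \<gamma> *\<^sub>R \<phi> \<gamma>) (\<phi> \<delta>)) has_sum inner S (\<phi> \<delta>)) UNIV"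
    by (rule has_sum_bounded_linear[OF bounded_linear_inner_left hs])
  moreover have "((\<lambda>\<gamma>. inner (d \<gamma> *\<^sub>R \<phi> \<gamma>) (\<phi> \<delta>)) has_sum d \<delta>) UNIV"
    by (rule has_sum_finite_neutralI[of "{\<delta>}"]) (auto simp: onb_inner[OF onb])
  ultimately show ?thesis using has_sum_unique by blast
qed

lemma onb_has_sum_norm:
  assumes onb: "orthonormal_basis \<phi>" and hs: "((\<lambda>\<gamma>. d \<gamma> *\<^sub>R \<phi> \<gamma>) has_sum S) UNIV"
  shows "((\<lambda>\<gamma>. (d \<gamma>)^2) has_sum (norm S)^2) UNIV"
proof -
  have lim: "((\<lambda>F. (norm (\<Sum>\<gamma>\<in>F. d \<gamma> *\<^sub>R \<phi> \<gamma>))^2) \<longlongrightarrow> (norm S)^2) (finite_subsets_at_top UNIV)"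
    using hs unfolding has_sum_def by (intro tendsto_intros)
  have ev: "eventually (\<lambda>F. (norm (\<Sum>\<gamma>\<in>F. d \<gamma> *\<^sub>R \<phi> \<gamma>))^2 = (\<Sum>\<gamma>\<in>F. (d \<gamma>)^2)) (finite_subsets_at_top UNIV)"
    using onb_sum_norm[OF onb] by (auto intro: eventually_finite_subsets_at_top_weakI)
  show ?thesis unfolding has_sum_def by (rule Lim_transform_eventually[OF lim ev])
qed

lemma onb_zero_functional:
  fixes \<phi> :: "'i \<Rightarrow> 'a::real_inner" and M :: "'a \<Rightarrow> real"
  assumes onb: "orthonormal_basis \<phi>" and M: "bounded_linear M" and z: "\<And>\<gamma>. M (\<phi> \<gamma>) = 0"
  shows "M x = 0"
proof -
  have lin: "linear M" using M bounded_linear.linear by blast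
  have sp: "M y = 0" if "y \<in> span (range \<phi>)" for y
  proof -
    from that obtain t r where "finite t" "t \<subseteq> range \<phi>" "y = (\<Sum>a\<in>t. r a *\<^sub>R a)"
      unfolding span_explicit by blast
    then show ?thesis using z by (auto simp: linear_sum[OF lin] linear_scale[OF lin] intro!: sum.neutral)
  qed
  have "closed {y. M y = 0}"
    using M by (intro closed_Collect_eq continuous_on_const) (simp add: linear_continuous_on)
  then have "closure (span (range \<phi>)) \<subseteq> {y. M y = 0}"
    using sp by (intro closure_minimal) auto
  then show ?thesis using onb_closure[OF onb] by auto
qed

lemma onb_ext:
  fixes \<phi> :: "'i \<Rightarrow> 'a::real_inner"
  assumes onb: "orthonormal_basis \<phi>" and z: "\<And>\<gamma>. inner v (\<phi> \<gamma>) = 0"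
  shows "v = 0"
proof -
  have "inner v v = 0"
    using onb_zero_functional[OF onb bounded_linear_inner_left[of v], of v] z
    by (simp add: inner_commute)
  then show ?thesis by simp
qed

lemma onb_coef_summable:
  fixes \<phi> :: "'i \<Rightarrow> 'a::real_inner"
  assumes onb: "orthonormal_basis \<phi>"
  shows "(\<lambda>\<gamma>. (inner x (\<phi> \<gamma>))^2) summable_on UNIV"
  by (rule nonneg_bdd_above_summable_on) (auto intro!: bdd_aboveI[of _ "(norm x)^2"] onb_bessel[OF onb])

lemma onb_expansion:
  fixes \<phi> :: "'i \<Rightarrow> 'a::{real_inner, complete_space}"
  assumes onb: "orthonormal_basis \<phi>"
  shows "((\<lambda>\<gamma>. inner x (\<phi> \<gamma>) *\<^sub>R \<phi> \<gamma>) has_sum x) UNIV"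
proof -
  obtain S where S: "((\<lambda>\<gamma>. inner x (\<phi> \<gamma>) *\<^sub>R \<phi> \<gamma>) has_sum S) UNIV"
    using onb_summable[OF onb onb_coef_summable[OF onb]] summable_on_def by blast
  have "x - S = 0"
    by (rule onb_ext[OF onb]) (simp add: inner_diff_left onb_has_sum_inner[OF onb S])
  then show ?thesis using S by simp
qed

lemma onb_parseval:
  fixes \<phi> :: "'i \<Rightarrow> 'a::{real_inner, complete_space}"
  assumes onb: "orthonormal_basis \<phi>"
  shows "((\<lambda>\<gamma>. (inner x (\<phi> \<gamma>))^2) has_sum (norm x)^2) UNIV"
  by (rule onb_has_sum_norm[OF onb onb_expansion[OF onb]])

lemma onb_inner_sum:
  fixes \<phi> :: "'i \<Rightarrow> 'a::{real_inner, complete_space}"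
  assumes onb: "orthonormal_basis \<phi>"
  shows "((\<lambda>\<gamma>. inner x (\<phi> \<gamma>) * inner y (\<phi> \<gamma>)) has_sum inner x y) UNIV"
proof -
  have "((\<lambda>\<gamma>. (1/4) * ((inner (x+y) (\<phi> \<gamma>))^2 + - ((inner (x-y) (\<phi> \<gamma>))^2)))
          has_sum ((1/4) * ((norm (x+y))^2 + - ((norm (x-y))^2)))) UNIV"
  proof (intro has_sum_cmult_right has_sum_add onb_parseval[OF onb])
    show "((\<lambda>\<gamma>. - ((inner (x-y) (\<phi> \<gamma>))^2)) has_sum - ((norm (x-y))^2)) UNIV"
      by (rule has_sum_uminus[THEN iffD2]) (simp only: minus_minus onb_parseval[OF onb])
  qed
  moreover have "(1/4) * ((norm (x+y))^2 + - ((norm (x-y))^2)) = inner x y"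
    by (simp add: power2_norm_eq_inner inner_add_left inner_add_right inner_diff_left inner_diff_right inner_commute)
  moreover have "(1/4) * ((inner (x+y) (\<phi> \<gamma>))^2 + - ((inner (x-y) (\<phi> \<gamma>))^2)) = inner x (\<phi> \<gamma>) * inner y (\<phi> \<gamma>)" for \<gamma>
    by (simp add: inner_add_left inner_diff_left power2_eq_square algebra_simps)
  ultimately show ?thesis by simp
qed

lemma riesz:
  fixes \<phi> :: "'i \<Rightarrow> 'a::{real_inner, complete_space}" and L :: "'a \<Rightarrow> real"
  assumes onb: "orthonormal_basis \<phi>" and L: "bounded_linear L"
  shows "\<exists>z. \<forall>x. L x = inner x z"
proof -
  obtain B where B: "\<And>x. norm (L x) \<le> norm x * B" "B > 0"
    using L bounded_linear.pos_bounded by blast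
  have lin: "linear L" using L bounded_linear.linear by blast
  have bnd: "(\<Sum>\<gamma>\<in>F. (L (\<phi> \<gamma>))^2) \<le> B^2" if "finite F" for F
  proof -
    define s where "s = (\<Sum>\<gamma>\<in>F. (L (\<phi> \<gamma>))^2)"
    define y where "y = (\<Sum>\<gamma>\<in>F. L (\<phi> \<gamma>) *\<^sub>R \<phi> \<gamma>)"
    have Ly: "L y = s" unfolding y_def s_def
      by (simp add: linear_sum[OF lin] linear_scale[OF lin] power2_eq_square)
    have ny: "(norm y)^2 = s" unfolding y_def s_def using onb_sum_norm[OF onb that] by simp
    have s0: "s \<ge> 0" unfolding s_def by (simp add: sum_nonneg)
    have "s \<le> norm y * B" using B(1)[of y] Ly by simp
    then have "s^2 \<le> (norm y * B)^2"
      using s0 by (intro power_mono) auto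
    then have "s^2 \<le> (norm y)^2 * B^2"
      by (simp add: power_mult_distrib)
    then have "s * s \<le> s * B^2" using ny by (simp add: power2_eq_square)
    then show ?thesis using s0 unfolding s_def[symmetric]
      by (cases "s = 0") (auto simp: B power2_eq_square)
  qed
  have sq: "(\<lambda>\<gamma>. (L (\<phi> \<gamma>))^2) summable_on UNIV"
    by (rule nonneg_bdd_above_summable_on) (auto intro!: bdd_aboveI[of _ "B^2"] bnd)
  obtain z where z: "((\<lambda>\<gamma>. L (\<phi> \<gamma>) *\<^sub>R \<phi> \<gamma>) has_sum z) UNIV"
    using onb_summable[OF onb sq] summable_on_def by blast
  have "L x - inner x z = 0" for x
  proof (rule onb_zero_functional[OF onb, where M="\<lambda>x. L x - inner x z"])
    show "bounded_linear (\<lambda>x. L x - inner x z)"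
      using L by (intro bounded_linear_sub bounded_linear_inner_left)
    show "L (\<phi> \<gamma>) - inner (\<phi> \<gamma>) z = 0" for \<gamma>
      using onb_has_sum_inner[OF onb z, of \<gamma>] by (simp add: inner_commute)
  qed
  then show ?thesis by auto
qed

lemma adjoint_ok:
  fixes \<phi> :: "'i \<Rightarrow> 'a::{real_inner, complete_space}" and K :: "'a \<Rightarrow> 'b::real_inner"
  assumes onb: "orthonormal_basis \<phi>" and K: "bounded_linear K"
  shows "inner (K x) y = inner x (adjoint K y)"
proof -
  have "\<forall>y. \<exists>z. \<forall>x. inner (K x) y = inner x z"
  proof
    fix y
    show "\<exists>z. \<forall>x. inner (K x) y = inner x z"
      by (rule riesz[OF onb]) (intro bounded_linear_compose[OF bounded_linear_inner_left K])
  qed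
  then obtain f' where "\<forall>y. \<forall>x. inner (K x) y = inner x (f' y)" using choice by metis
  then have "\<exists>f'. \<forall>x y. inner (K x) y = inner x (f' y)" by blast
  then have "\<forall>x y. inner (K x) y = inner x (adjoint K y)"
    unfolding adjoint_def by (rule someI_ex)
  then show ?thesis by blast
qed

lemma sgnpow_mono:
  fixes s s' q :: real
  assumes "q \<ge> 0" "s \<le> s'"
  shows "sgn s * \<bar>s\<bar> powr q \<le> sgn s' * \<bar>s'\<bar> powr q"
proof (cases "s \<ge> 0")
  case True
  then show ?thesis using assms by (auto simp: sgn_if intro: powr_mono2)
next
  case False
  show ?thesis
  proof (cases "s' \<ge> 0")
    case True
    have "sgn s * \<bar>s\<bar> powr q \<le> 0" using False by (simp add: sgn_if)
    moreover have "0 \<le> sgn s' * \<bar>s'\<bar> powr q" using True by (simp add: sgn_if)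
    ultimately show ?thesis by linarith
  next
    case False2: False
    have "\<bar>s'\<bar> powr q \<le> \<bar>s\<bar> powr q" using assms False False2 by (intro powr_mono2) auto
    then show ?thesis using False False2 by (simp add: sgn_if)
  qed
qed

lemma Fcp_neg: "Fcp w p (-s) = - Fcp w p s"
  by (simp add: Fcp_def sgn_minus)

lemma Fcp_nonneg: "s \<ge> 0 \<Longrightarrow> Fcp w p s = s + (w*p/2) * s powr (p - 1)"
  by (cases "s = 0") (auto simp: Fcp_def sgn_if)

lemma Fcp_strict_mono:
  assumes "w > 0" "p \<ge> 1" "s < s'"
  shows "Fcp w p s < Fcp w p s'"
proof -
  have "sgn s * \<bar>s\<bar> powr (p-1) \<le> sgn s' * \<bar>s'\<bar> powr (p-1)"
    using assms by (intro sgnpow_mono) auto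
  moreover have "w*p/2 \<ge> 0" using assms by simp
  ultimately have "(w*p/2) * (sgn s * \<bar>s\<bar> powr (p-1)) \<le> (w*p/2) * (sgn s' * \<bar>s'\<bar> powr (p-1))"
    by (rule mult_left_mono)
  then show ?thesis using assms(3) unfolding Fcp_def by (simp add: mult.assoc)
qed

lemma Fcp_surj_nonneg:
  assumes "w > 0" "p > 1" "t \<ge> 0"
  shows "\<exists>s. Fcp w p s = t"
proof -
  define H where "H s = s + (w*p/2) * s powr (p - 1)" for s
  have cont: "continuous_on {0..t} H"
    unfolding H_def using assms
    by (intro continuous_intros continuous_on_powr') auto
  have "H 0 \<le> t" using assms by (simp add: H_def)
  moreover have "t \<le> H t" using assms unfolding H_def by (simp add: mult_nonneg_nonneg)
  ultimately obtain s where "0 \<le> s" "s \<le> t" "H s = t"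
    using IVT'[of H 0 t t] cont assms by auto
  then show ?thesis using Fcp_nonneg[of s w p] H_def by auto
qed

lemma Fcp_surj:
  assumes "w > 0" "p > 1"
  shows "\<exists>s. Fcp w p s = t"
proof (cases "t \<ge> 0")
  case True then show ?thesis using Fcp_surj_nonneg assms by blast
next
  case False
  then obtain s where "Fcp w p s = -t" using Fcp_surj_nonneg[of w p "-t"] assms by auto
  then have "Fcp w p (-s) = t" by (simp add: Fcp_neg)
  then show ?thesis by blast
qed

lemma Scp_inv:
  assumes "w > 0" "p > 1"
  shows "Fcp w p (Scp w p t) = t"
proof -
  have ex1: "\<exists>!s. Fcp w p s = t"
  proof -
    obtain s where s: "Fcp w p s = t" using Fcp_surj assms by blast
    moreover have "s' = s" if "Fcp w p s' = t" for s'
      using Fcp_strict_mono[of w p s s'] Fcp_strict_mono[of w p s' s] assms s that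
      by (cases s s' rule: linorder_cases) auto
    ultimately show ?thesis by blast
  qed
  have "Scp w p t = (THE s. Fcp w p s = t)" using assms by (simp add: Scp_def)
  then show ?thesis using theI'[OF ex1] by simp
qed

definition mfun :: "real \<Rightarrow> real \<Rightarrow> real \<Rightarrow> real" where
  "mfun w p s = (w*p/2) * (sgn s * \<bar>s\<bar> powr (p - 1))"

lemma mfun_mono:
  assumes "w > 0" "p \<ge> 1" "s \<le> s'"
  shows "mfun w p s \<le> mfun w p s'"
  unfolding mfun_def using assms by (intro mult_left_mono sgnpow_mono) auto

lemma Scp_decomp:
  assumes "w > 0" "p > 1"
  shows "t = Scp w p t + mfun w p (Scp w p t)"
  using Scp_inv[OF assms, of t] by (simp add: Fcp_def mfun_def mult.assoc)

lemma Scp_mono: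
  assumes "w > 0" "p \<ge> 1" "x \<le> y"
  shows "Scp w p x \<le> Scp w p y"
proof (cases "p = 1")
  case True
  then show ?thesis using assms by (auto simp: Scp_def)
next
  case False
  then have p: "p > 1" using assms by simp
  show ?thesis
  proof (rule ccontr)
    assume "\<not> ?thesis"
    then have "Fcp w p (Scp w p y) < Fcp w p (Scp w p x)"
      using Fcp_strict_mono assms by simp
    then show False using Scp_inv[OF assms(1) p] assms by simp
  qed
qed

lemma Gcp_mono:
  assumes "w > 0" "p \<ge> 1" "x \<le> y"
  shows "x - Scp w p x \<le> y - Scp w p y"
proof (cases "p = 1")
  case True
  then show ?thesis using assms by (auto simp: Scp_def)
next
  case False
  then have p: "p > 1" using assms by simp
  have "mfun w p (Scp w p x) \<le> mfun w p (Scp w p y)"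
    using assms by (intro mfun_mono Scp_mono) auto
  then show ?thesis
    using Scp_decomp[OF assms(1) p, of x] Scp_decomp[OF assms(1) p, of y] by linarith
qed

lemma Scp_0: "Scp w p 0 = 0" if "w > 0" "p \<ge> 1"
proof (cases "p = 1")
  case True then show ?thesis using that by (simp add: Scp_def)
next
  case False
  then have p: "p > 1" using that by simp
  have "Fcp w p 0 = 0" by (simp add: Fcp_def)
  moreover have "Fcp w p (Scp w p 0) = 0" using Scp_inv[OF that(1) p] .
  ultimately show ?thesis
    using Fcp_strict_mono[of w p 0 "Scp w p 0"] Fcp_strict_mono[of w p "Scp w p 0" 0] that
    by (cases "Scp w p 0" "0::real" rule: linorder_cases) auto
qed

lemma Scp_firm:
  assumes "w > 0" "p \<ge> 1"
  shows "(Scp w p x - Scp w p y)^2 \<le> (Scp w p x - Scp w p y) * (x - y)"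
proof -
  have "0 \<le> (Scp w p x - Scp w p y) * ((x - Scp w p x) - (y - Scp w p y))"
  proof (cases "x \<le> y")
    case True
    then show ?thesis using Scp_mono[OF assms True] Gcp_mono[OF assms True]
      by (intro mult_nonpos_nonpos) auto
  next
    case False
    then have yx: "y \<le> x" by simp
    show ?thesis using Scp_mono[OF assms yx] Gcp_mono[OF assms yx]
      by (intro mult_nonneg_nonneg) auto
  qed
  then show ?thesis by (simp add: power2_eq_square algebra_simps)
qed

lemma Scp_lip:
  assumes "w > 0" "p \<ge> 1"
  shows "\<bar>Scp w p x - Scp w p y\<bar> \<le> \<bar>x - y\<bar>"
proof -
  define a where "a = Scp w p x - Scp w p y"
  have f: "a^2 \<le> a * (x - y)" using Scp_firm[OF assms, of x y] by (simp add: a_def)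
  have g: "a * (x - y) \<le> \<bar>a\<bar> * \<bar>x - y\<bar>" using abs_ge_self[of "a*(x-y)"] by (simp only: abs_mult)
  have h: "\<bar>a\<bar> * \<bar>a\<bar> = a^2" by (simp add: power2_eq_square abs_mult_self_eq)
  have aa: "\<bar>a\<bar> * \<bar>a\<bar> \<le> \<bar>a\<bar> * \<bar>x - y\<bar>" using f g h by linarith
  have "\<bar>a\<bar> \<le> \<bar>x - y\<bar>"
  proof (cases "a = 0")
    case False
    then have "\<bar>a\<bar> > 0" by simp
    then show ?thesis using mult_left_le_imp_le[OF aa] by blast
  qed simp
  then show ?thesis by (simp add: a_def)
qed

lemma Scp_abs_le: "w > 0 \<Longrightarrow> p \<ge> 1 \<Longrightarrow> \<bar>Scp w p t\<bar> \<le> \<bar>t\<bar>"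
  using Scp_lip[of w p t 0] Scp_0[of w p] by simp

lemma pow_slope0:
  fixes q a b :: real
  assumes q: "0 < q" "q \<le> 1" and ab: "0 \<le> a" "a < b" "b \<le> 2"
  shows "b powr q - a powr q \<ge> (q/2) * (b - a)"
proof -
  have b0: "b > 0" using ab by simp
  have bq: "b powr (q - 1) \<ge> 1/2"
  proof -
    have "b powr (q - 1) \<ge> 2 powr (q - 1)" using q ab by (intro powr_mono2') auto
    moreover have "2 powr (q - 1) \<ge> 2 powr (-1)" using q by (intro powr_mono) auto
    ultimately show ?thesis by (simp add: powr_minus)
  qed
  have bpq: "b powr q = b * b powr (q - 1)"
    using b0 by (simp add: powr_diff)
  show ?thesis
  proof (cases "a = 0")
    case True
    have "(q/2) * b \<le> (1/2) * b" using q b0 by (intro mult_right_mono) auto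
    also have "\<dots> \<le> b * b powr (q - 1)" using bq b0 by (simp add: mult.commute)
    finally show ?thesis using True bpq by simp
  next
    case False
    then have a0: "a > 0" using ab by simp
    have "(a/b) powr q * 1 powr (1 - q) \<le> q * (a/b) + (1 - q) * 1"
      using q a0 b0 by (intro Youngs_inequality_0) auto
    then have y: "(a/b) powr q \<le> q * (a/b) + (1 - q)" by simp
    have "a powr q = b powr q * (a/b) powr q"
      using a0 b0 by (simp add: powr_divide)
    also have "\<dots> \<le> b powr q * (q * (a/b) + (1 - q))"
      using y by (intro mult_left_mono) auto
    finally have "b powr q - a powr q \<ge> b powr q * (1 - (q * (a/b) + (1 - q)))"
      by (simp add: algebra_simps)
    also have "b powr q * (1 - (q * (a/b) + (1 - q))) = q * b powr (q - 1) * (b - a)"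
      using b0 by (simp add: bpq field_simps)
    finally have *: "b powr q - a powr q \<ge> q * b powr (q - 1) * (b - a)" .
    have "(q/2) * (b - a) \<le> q * b powr (q - 1) * (b - a)"
      using bq q ab by (intro mult_right_mono) auto
    then show ?thesis using * by linarith
  qed
qed

lemma pow_slope0':
  fixes q a :: real
  assumes q: "0 < q" "q \<le> 1" and ab: "0 \<le> a" "a \<le> 2"
  shows "a powr q \<ge> (q/2) * a"
  using pow_slope0[OF q, of 0 a] ab by (cases "a = 0") auto

lemma sgnpow_slope:
  fixes q s s' :: real
  assumes q: "0 < q" "q \<le> 1" and ss: "s' \<le> s" "\<bar>s\<bar> \<le> 2" "\<bar>s'\<bar> \<le> 2"
  shows "sgn s * \<bar>s\<bar> powr q - sgn s' * \<bar>s'\<bar> powr q \<ge> (q/2) * (s - s')"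
proof (cases "s = s'")
  case True then show ?thesis by simp
next
  case False
  then have lt: "s' < s" using ss by simp
  show ?thesis
  proof (cases "s' \<ge> 0")
    case True
    show ?thesis
    proof (cases "s' = 0")
      case True
      then show ?thesis using pow_slope0'[OF q, of s] lt ss by (simp add: sgn_if)
    next
      case False
      then show ?thesis using pow_slope0[OF q, of s' s] lt ss \<open>s' \<ge> 0\<close> by (simp add: sgn_if)
    qed
  next
    case False
    note s'neg = False
    show ?thesis
    proof (cases "s \<ge> 0")
      case True
      have "s powr q \<ge> (q/2) * s" using pow_slope0'[OF q, of s] True ss by simp
      moreover have "(-s') powr q \<ge> (q/2) * (-s')" using pow_slope0'[OF q, of "-s'"] s'neg ss by simp
      ultimately show ?thesis using True s'neg
        by (cases "s = 0") (auto simp: sgn_if algebra_simps)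
    next
      case False
      have "(-s') powr q - (-s) powr q \<ge> (q/2) * ((-s') - (-s))"
        using pow_slope0[OF q, of "-s" "-s'"] False lt ss by simp
      then show ?thesis using False s'neg by (simp add: sgn_if algebra_simps)
    qed
  qed
qed

lemma mfun_slope:
  assumes c: "c > 0" "w \<ge> c" and p: "1 < p" "p \<le> 2" "p - 1 \<ge> \<rho>" "\<rho> > 0"
    and ss: "s' \<le> s" "\<bar>s\<bar> \<le> 2" "\<bar>s'\<bar> \<le> 2"
  shows "mfun w p s - mfun w p s' \<ge> (c*\<rho>/4) * (s - s')"
proof -
  have sl: "sgn s * \<bar>s\<bar> powr (p-1) - sgn s' * \<bar>s'\<bar> powr (p-1) \<ge> ((p-1)/2) * (s - s')"
    using sgnpow_slope[of "p-1" s' s] p ss by auto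
  have wp: "w * 1 \<le> w * p" using c p by (intro mult_left_mono) auto
  have "(c*\<rho>/4) * (s - s') = (c/2) * ((\<rho>/2) * (s - s'))" by simp
  also have "\<dots> \<le> (w*p/2) * (((p-1)/2) * (s - s'))"
  proof (rule mult_mono)
    show "c/2 \<le> w*p/2" using c wp by linarith
    show "(\<rho>/2) * (s - s') \<le> ((p-1)/2) * (s - s')" using p ss by (intro mult_right_mono) auto
    show "0 \<le> w*p/2" using c p by simp
    show "0 \<le> (\<rho>/2) * (s - s')" using p ss by simp
  qed
  also have "\<dots> \<le> (w*p/2) * (sgn s * \<bar>s\<bar> powr (p-1) - sgn s' * \<bar>s'\<bar> powr (p-1))"
    using sl c p by (intro mult_left_mono) auto
  also have "\<dots> = mfun w p s - mfun w p s'"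
    unfolding mfun_def by (simp add: right_diff_distrib)
  finally show ?thesis .
qed

lemma G_slope:
  assumes c: "c > 0" "w \<ge> c" and p: "1 < p" "p \<le> 2" "p - 1 \<ge> \<rho>" "\<rho> > 0"
    and xy: "\<bar>x\<bar> \<le> 2" "\<bar>y\<bar> \<le> 2" "y \<le> x"
  shows "((c*\<rho>/4)/(1 + c*\<rho>/4)) * (x - y) \<le> (x - Scp w p x) - (y - Scp w p y)"
proof -
  define r where "r = c*\<rho>/4"
  have r0: "r > 0" using c p by (simp add: r_def)
  have w0: "w > 0" using c by simp
  define s s' where "s = Scp w p x" and "s' = Scp w p y"
  have ss: "s' \<le> s" unfolding s_def s'_def using Scp_mono[OF w0 _ xy(3)] p by simp
  have sb: "\<bar>s\<bar> \<le> 2" "\<bar>s'\<bar> \<le> 2"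
    unfolding s_def s'_def using Scp_abs_le[OF w0, of p] p xy by (auto intro: order_trans)
  have dx: "x = s + mfun w p s" unfolding s_def using Scp_decomp[OF w0 p(1)] .
  have dy: "y = s' + mfun w p s'" unfolding s'_def using Scp_decomp[OF w0 p(1)] .
  have sl: "mfun w p s - mfun w p s' \<ge> r * (s - s')"
    unfolding r_def using mfun_slope[OF c p ss sb] .
  have "r * (x - y) \<le> (1 + r) * ((x - s) - (y - s'))"
    using sl dx dy by (simp add: algebra_simps)
  then have "r * (x - y) / (1 + r) \<le> (x - s) - (y - s')"
    using r0 by (simp add: pos_divide_le_eq mult.commute)
  then show ?thesis unfolding r_def[symmetric] s_def[symmetric] s'_def[symmetric] by simp
qed

lemma key_scalar:
  assumes c: "c > 0" "w \<ge> c" and p: "p = 1 \<or> (1 < p \<and> p \<le> 2 \<and> p - 1 \<ge> \<rho>)" and \<rho>: "\<rho> > 0"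
    and \<alpha>: "\<bar>\<alpha>\<bar> \<le> c/4" "\<bar>\<alpha>\<bar> \<le> 1"
    and D: "\<bar>Scp w p (\<alpha>+\<nu>) - Scp w p \<alpha> - \<nu>\<bar> < (c*\<rho>/4)/(1 + c*\<rho>/4)"
           "\<bar>Scp w p (\<alpha>+\<nu>) - Scp w p \<alpha> - \<nu>\<bar> < c/8"
  shows "\<nu>^2 \<le> (Scp w p (\<alpha>+\<nu>) - Scp w p \<alpha> - \<nu>)^2 / ((c*\<rho>/4)/(1 + c*\<rho>/4))^2"
proof -
  define \<kappa> where "\<kappa> = (c*\<rho>/4)/(1 + c*\<rho>/4)"
  define Dv where "Dv = Scp w p (\<alpha>+\<nu>) - Scp w p \<alpha> - \<nu>"
  have cr: "c*\<rho> > 0" using c \<rho> by simp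
  have k0: "\<kappa> > 0" unfolding \<kappa>_def using cr by (intro divide_pos_pos) auto
  have k1: "\<kappa> < 1" unfolding \<kappa>_def using cr by (simp add: divide_less_eq)
  have w0: "w > 0" using c by simp
  have main: "\<kappa> * \<bar>\<nu>\<bar> \<le> \<bar>Dv\<bar>"
  proof (cases "p = 1")
    case True
    have Sa: "Scp w p \<alpha> = 0" using True \<alpha> c by (auto simp: Scp_def)
    show ?thesis
    proof (cases "\<bar>\<alpha>+\<nu>\<bar> \<le> w/2")
      case True
      then have "Scp w p (\<alpha>+\<nu>) = 0" using \<open>p = 1\<close> unfolding Scp_def by (auto simp: abs_if split: if_splits)
      then have "Dv = -\<nu>" using Sa by (simp add: Dv_def)
      moreover have "\<kappa> * \<bar>\<nu>\<bar> \<le> 1 * \<bar>\<nu>\<bar>" using k1 by (intro mult_right_mono) auto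
      ultimately show ?thesis by simp
    next
      case False
      then have "\<bar>Dv\<bar> \<ge> c/4" using \<open>p = 1\<close> Sa \<alpha> c unfolding Dv_def Scp_def by (auto simp: abs_if split: if_splits)
      then show ?thesis using D(2) c unfolding Dv_def by linarith
    qed
  next
    case False
    then have p1: "1 < p" "p \<le> 2" "p - 1 \<ge> \<rho>" using p by auto
    have pge: "p \<ge> 1" using p1 by simp
    define G where "G t = t - Scp w p t" for t
    have Dv': "Dv = -(G (\<alpha>+\<nu>) - G \<alpha>)" by (simp add: Dv_def G_def)
    have nu1: "\<bar>\<nu>\<bar> < 1"
    proof (rule ccontr)
      assume "\<not> \<bar>\<nu>\<bar> < 1"
      then consider "\<nu> \<ge> 1" | "\<nu> \<le> -1" by linarith
      then show False
      proof cases
        case 1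
        have "G (\<alpha>+1) \<le> G (\<alpha>+\<nu>)" unfolding G_def using Gcp_mono[OF w0 pge] 1 by simp
        moreover have "\<kappa> * ((\<alpha>+1) - \<alpha>) \<le> G (\<alpha>+1) - G \<alpha>"
          unfolding \<kappa>_def G_def using \<alpha> by (intro G_slope[OF c p1 \<rho>]) auto
        ultimately have "\<kappa> \<le> \<bar>Dv\<bar>" using Dv' by simp
        then show False using D(1) Dv_def \<kappa>_def by simp
      next
        case 2
        have "G (\<alpha>+\<nu>) \<le> G (\<alpha>-1)" unfolding G_def using Gcp_mono[OF w0 pge] 2 by simp
        moreover have "\<kappa> * (\<alpha> - (\<alpha>-1)) \<le> G \<alpha> - G (\<alpha>-1)"
          unfolding \<kappa>_def G_def using \<alpha> by (intro G_slope[OF c p1 \<rho>]) auto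
        ultimately have "\<kappa> \<le> \<bar>Dv\<bar>" using Dv' by simp
        then show False using D(1) Dv_def \<kappa>_def by simp
      qed
    qed
    show ?thesis
    proof (cases "\<nu> \<ge> 0")
      case True
      have "\<kappa> * ((\<alpha>+\<nu>) - \<alpha>) \<le> G (\<alpha>+\<nu>) - G \<alpha>"
        unfolding \<kappa>_def G_def using \<alpha> nu1 True by (intro G_slope[OF c p1 \<rho>]) auto
      then show ?thesis using Dv' True by simp
    next
      case False
      have "\<kappa> * (\<alpha> - (\<alpha>+\<nu>)) \<le> G \<alpha> - G (\<alpha>+\<nu>)"
        unfolding \<kappa>_def G_def using \<alpha> nu1 False by (intro G_slope[OF c p1 \<rho>]) auto
      then show ?thesis using Dv' False by simp
    qed
  qed
  have "(\<kappa> * \<bar>\<nu>\<bar>)^2 \<le> \<bar>Dv\<bar>^2"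
    using main k0 by (intro power_mono) auto
  then have "\<nu>^2 * \<kappa>^2 \<le> Dv^2" by (simp add: power_mult_distrib mult.commute)
  then have "\<nu>^2 \<le> Dv^2 / \<kappa>^2" using k0 by (simp add: le_divide_eq)
  then show ?thesis by (simp add: Dv_def \<kappa>_def)
qed

lemma SWP_coef:
  fixes \<phi> :: "'i \<Rightarrow> 'a::{real_inner, complete_space}"
  assumes onb: "orthonormal_basis \<phi>" and w: "\<And>\<gamma>. w \<gamma> > 0" and p: "\<And>\<gamma>. p \<gamma> \<ge> 1"
  shows "inner (SWP \<phi> w p h) (\<phi> \<delta>) = Scp (w \<delta>) (p \<delta>) (inner h (\<phi> \<delta>))"
proof -
  define d where "d \<gamma> = Scp (w \<gamma>) (p \<gamma>) (inner h (\<phi> \<gamma>))" for \<gamma>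
  have le: "(d \<gamma>)^2 \<le> (inner h (\<phi> \<gamma>))^2" for \<gamma>
    unfolding d_def using Scp_abs_le[OF w p] by (simp add: abs_le_square_iff)
  have "(\<lambda>\<gamma>. (d \<gamma>)^2) summable_on UNIV"
    by (rule summable_on_comparison_test[OF onb_coef_summable[OF onb, of h]]) (use le in auto)
  then have "(\<lambda>\<gamma>. d \<gamma> *\<^sub>R \<phi> \<gamma>) summable_on UNIV" by (rule onb_summable[OF onb])
  then have "((\<lambda>\<gamma>. d \<gamma> *\<^sub>R \<phi> \<gamma>) has_sum SWP \<phi> w p h) UNIV"
    unfolding SWP_def d_def[symmetric] by (rule has_sum_infsum)
  then show ?thesis using onb_has_sum_inner[OF onb] d_def by simp
qed

lemma SWP_firm:
  fixes \<phi> :: "'i \<Rightarrow> 'a::{real_inner, complete_space}"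
  assumes onb: "orthonormal_basis \<phi>" and w: "\<And>\<gamma>. w \<gamma> > 0" and p: "\<And>\<gamma>. p \<gamma> \<ge> 1"
  shows "(norm (SWP \<phi> w p a - SWP \<phi> w p b))^2 \<le> inner (SWP \<phi> w p a - SWP \<phi> w p b) (a - b)"
proof -
  let ?X = "SWP \<phi> w p a - SWP \<phi> w p b"
  have cX: "inner ?X (\<phi> \<gamma>) = Scp (w \<gamma>) (p \<gamma>) (inner a (\<phi> \<gamma>)) - Scp (w \<gamma>) (p \<gamma>) (inner b (\<phi> \<gamma>))" for \<gamma>
    by (simp add: inner_diff_left SWP_coef[OF onb w p])
  have h1: "((\<lambda>\<gamma>. (inner ?X (\<phi> \<gamma>))^2) has_sum (norm ?X)^2) UNIV" by (rule onb_parseval[OF onb])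
  have h2: "((\<lambda>\<gamma>. inner ?X (\<phi> \<gamma>) * inner (a - b) (\<phi> \<gamma>)) has_sum inner ?X (a - b)) UNIV"
    by (rule onb_inner_sum[OF onb])
  show ?thesis
  proof (rule has_sum_mono[OF h1 h2])
    fix \<gamma>
    show "(inner ?X (\<phi> \<gamma>))^2 \<le> inner ?X (\<phi> \<gamma>) * inner (a - b) (\<phi> \<gamma>)"
      unfolding cX using Scp_firm[OF w p] by (simp add: inner_diff_left)
  qed
qed

lemma firm_imp_nonexp:
  fixes X Y :: "'a::real_inner"
  assumes "(norm X)^2 \<le> inner X Y"
  shows "norm X \<le> norm Y"
proof -
  have "norm X * norm X \<le> norm X * norm Y"
    using assms Cauchy_Schwarz_ineq2[of X Y] by (simp add: power2_eq_square)
  then show ?thesis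
    by (cases "X = 0") (auto simp: mult_le_cancel_left_pos)
qed

lemma firm_split:
  fixes X Y :: "'a::real_inner"
  assumes "(norm X)^2 \<le> inner X Y"
  shows "(norm X)^2 + (norm (X - Y))^2 \<le> (norm Y)^2"
proof -
  have "(norm (X - Y))^2 = (norm X)^2 - 2 * inner X Y + (norm Y)^2"
    by (simp add: power2_norm_eq_inner inner_diff_left inner_diff_right inner_commute)
  then show ?thesis using assms by simp
qed

lemma SWP_nonexp:
  fixes \<phi> :: "'i \<Rightarrow> 'a::{real_inner, complete_space}"
  assumes onb: "orthonormal_basis \<phi>" and w: "\<And>\<gamma>. w \<gamma> > 0" and p: "\<And>\<gamma>. p \<gamma> \<ge> 1"
  shows "norm (SWP \<phi> w p a - SWP \<phi> w p b) \<le> norm (a - b)"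
  by (rule firm_imp_nonexp[OF SWP_firm[OF onb w p]])

lemma onb_norm1:
  assumes "orthonormal_basis \<phi>" shows "norm (\<phi> \<gamma>) = 1"
  using onb_inner[OF assms, of \<gamma> \<gamma>] by (simp add: norm_eq_sqrt_inner)

lemma coef_le_norm:
  assumes "orthonormal_basis \<phi>" shows "\<bar>inner x (\<phi> \<gamma>)\<bar> \<le> norm x"
  using Cauchy_Schwarz_ineq2[of x "\<phi> \<gamma>"] onb_norm1[OF assms] by simp

lemma sqrt_null:
  fixes X :: "nat \<Rightarrow> real"
  assumes "\<And>k. X k \<ge> 0" "(\<lambda>k. (X k)^2) \<longlonglongrightarrow> 0"
  shows "X \<longlonglongrightarrow> 0"
proof -
  have "(\<lambda>k. sqrt ((X k)^2)) \<longlonglongrightarrow> sqrt 0" by (intro tendsto_intros assms(2))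
  then show ?thesis using assms(1) by simp
qed

lemma part_C:
  fixes \<phi> :: "'i \<Rightarrow> 'a::{real_inner, complete_space}"
  assumes onb: "orthonormal_basis \<phi>" and c: "c > 0" and wge: "\<And>\<gamma>. w \<gamma> \<ge> c" and \<rho>: "\<rho> > 0"
    and pr: "\<And>\<gamma>. p \<gamma> = 1 \<or> (1 < p \<gamma> \<and> p \<gamma> \<le> 2 \<and> p \<gamma> - 1 \<ge> \<rho>)"
    and weak: "weakly_converges v 0"
    and lim: "(\<lambda>k. norm (SWP \<phi> w p (a + v k) - SWP \<phi> w p a - v k)) \<longlonglongrightarrow> 0"
  shows "(\<lambda>k. norm (v k)) \<longlonglongrightarrow> 0"
proof -
  have w0: "w \<gamma> > 0" for \<gamma> by (rule less_le_trans[OF c wge])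
  have p1: "p \<gamma> \<ge> 1" for \<gamma> using pr[of \<gamma>] by auto
  define \<kappa> where "\<kappa> = (c*\<rho>/4)/(1 + c*\<rho>/4)"
  have cr: "c*\<rho> > 0" using c \<rho> by simp
  have k0: "\<kappa> > 0" unfolding \<kappa>_def using cr by (intro divide_pos_pos) auto
  define \<delta> where "\<delta> = min (c/4) 1"
  have d0: "\<delta> > 0" using c by (simp add: \<delta>_def)
  define \<Gamma>0 where "\<Gamma>0 = {\<gamma>. \<bar>inner a (\<phi> \<gamma>)\<bar> > \<delta>}"
  have fin: "finite \<Gamma>0"
  proof -
    have "card G \<le> nat \<lceil>(norm a)^2 / \<delta>^2\<rceil>" if G: "G \<subseteq> \<Gamma>0" "finite G" for G
    proof -
      have "real (card G) * \<delta>^2 \<le> (\<Sum>\<gamma>\<in>G. (inner a (\<phi> \<gamma>))^2)"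
      proof (rule sum_bounded_below)
        fix \<gamma> assume "\<gamma> \<in> G"
        then have "\<delta> < \<bar>inner a (\<phi> \<gamma>)\<bar>" using G unfolding \<Gamma>0_def by auto
        then have "\<delta>^2 \<le> \<bar>inner a (\<phi> \<gamma>)\<bar>^2" using d0 by (intro power_mono) auto
        then show "\<delta>^2 \<le> (inner a (\<phi> \<gamma>))^2" by simp
      qed
      also have "\<dots> \<le> (norm a)^2" by (rule onb_bessel[OF onb G(2)])
      finally have "real (card G) \<le> (norm a)^2 / \<delta>^2" using d0 by (simp add: le_divide_eq)
      then have "real (card G) \<le> real (nat \<lceil>(norm a)^2 / \<delta>^2\<rceil>)" by linarith
      then show ?thesis by linarith
    qed
    then show ?thesis using finite_if_finite_subsets_card_bdd by blast
  qed
  define Dk where "Dk k = SWP \<phi> w p (a + v k) - SWP \<phi> w p a - v k" for k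
  have cD: "inner (Dk k) (\<phi> \<gamma>) = Scp (w \<gamma>) (p \<gamma>) (inner a (\<phi> \<gamma>) + inner (v k) (\<phi> \<gamma>))
        - Scp (w \<gamma>) (p \<gamma>) (inner a (\<phi> \<gamma>)) - inner (v k) (\<phi> \<gamma>)" for k \<gamma>
    unfolding Dk_def by (simp add: inner_diff_left inner_add_left SWP_coef[OF onb w0 p1])
  have "eventually (\<lambda>k. norm (Dk k) < min \<kappa> (c/8)) sequentially"
    using lim k0 c unfolding Dk_def by (intro order_tendstoD(2)) auto
  then have ev: "eventually (\<lambda>k. (norm (v k))^2 \<le> (norm (Dk k))^2 / \<kappa>^2 + (\<Sum>\<gamma>\<in>\<Gamma>0. (inner (v k) (\<phi> \<gamma>))^2)) sequentially"
  proof (rule eventually_mono)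
    fix k assume small: "norm (Dk k) < min \<kappa> (c/8)"
    have h1: "((\<lambda>\<gamma>. (inner (v k) (\<phi> \<gamma>))^2) has_sum (norm (v k))^2) UNIV"
      by (rule onb_parseval[OF onb])
    have h2: "((\<lambda>\<gamma>. (inner (Dk k) (\<phi> \<gamma>))^2 / \<kappa>^2 + (if \<gamma> \<in> \<Gamma>0 then (inner (v k) (\<phi> \<gamma>))^2 else 0))
         has_sum ((norm (Dk k))^2 / \<kappa>^2 + (\<Sum>\<gamma>\<in>\<Gamma>0. (inner (v k) (\<phi> \<gamma>))^2))) UNIV"
    proof (rule has_sum_add)
      show "((\<lambda>\<gamma>. (inner (Dk k) (\<phi> \<gamma>))^2 / \<kappa>^2) has_sum (norm (Dk k))^2 / \<kappa>^2) UNIV"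
        using has_sum_cmult_left[OF onb_parseval[OF onb, of "Dk k"], of "1/\<kappa>^2"] by simp
      show "((\<lambda>\<gamma>. if \<gamma> \<in> \<Gamma>0 then (inner (v k) (\<phi> \<gamma>))^2 else 0) has_sum (\<Sum>\<gamma>\<in>\<Gamma>0. (inner (v k) (\<phi> \<gamma>))^2)) UNIV"
        by (rule has_sum_finite_neutralI[OF fin]) auto
    qed
    show "(norm (v k))^2 \<le> (norm (Dk k))^2 / \<kappa>^2 + (\<Sum>\<gamma>\<in>\<Gamma>0. (inner (v k) (\<phi> \<gamma>))^2)"
    proof (rule has_sum_mono[OF h1 h2])
      fix \<gamma>
      show "(inner (v k) (\<phi> \<gamma>))^2 \<le> (inner (Dk k) (\<phi> \<gamma>))^2 / \<kappa>^2 + (if \<gamma> \<in> \<Gamma>0 then (inner (v k) (\<phi> \<gamma>))^2 else 0)"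
      proof (cases "\<gamma> \<in> \<Gamma>0")
        case True
        then show ?thesis by simp
      next
        case False
        then have al: "\<bar>inner a (\<phi> \<gamma>)\<bar> \<le> c/4" "\<bar>inner a (\<phi> \<gamma>)\<bar> \<le> 1"
          unfolding \<Gamma>0_def \<delta>_def by auto
        have Dsm: "\<bar>inner (Dk k) (\<phi> \<gamma>)\<bar> < min \<kappa> (c/8)"
          using coef_le_norm[OF onb, of "Dk k" \<gamma>] small by linarith
        have "(inner (v k) (\<phi> \<gamma>))^2 \<le> (inner (Dk k) (\<phi> \<gamma>))^2 / \<kappa>^2"
          unfolding cD \<kappa>_def
          by (rule key_scalar[OF c wge pr \<rho> al]) (use Dsm in \<open>simp_all add: cD \<kappa>_def\<close>)
        then show ?thesis using False by simp
      qed
    qed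
  qed
  have t1: "(\<lambda>k. norm (Dk k)) \<longlonglongrightarrow> 0" using lim unfolding Dk_def .
  have t2: "(\<lambda>k. inner (v k) (\<phi> \<gamma>)) \<longlonglongrightarrow> 0" for \<gamma>
  proof -
    have "(\<lambda>k. inner (v k) (\<phi> \<gamma>)) \<longlonglongrightarrow> inner 0 (\<phi> \<gamma>)"
      using weak unfolding weakly_converges_def by blast
    then show ?thesis by simp
  qed
  have l1a: "(\<lambda>k. (norm (Dk k))^2 / \<kappa>^2) \<longlonglongrightarrow> 0^2 / \<kappa>^2"
    by (rule tendsto_divide[OF tendsto_power[OF t1] tendsto_const]) (use k0 in simp)
  have l1b: "(\<lambda>k. \<Sum>\<gamma>\<in>\<Gamma>0. (inner (v k) (\<phi> \<gamma>))^2) \<longlonglongrightarrow> (\<Sum>\<gamma>\<in>\<Gamma>0. 0^2)"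
    by (rule tendsto_sum) (rule tendsto_power[OF t2])
  have l1: "(\<lambda>k. (norm (Dk k))^2 / \<kappa>^2 + (\<Sum>\<gamma>\<in>\<Gamma>0. (inner (v k) (\<phi> \<gamma>))^2)) \<longlonglongrightarrow> 0"
    using tendsto_add[OF l1a l1b] by simp
  have "(\<lambda>k. (norm (v k))^2) \<longlonglongrightarrow> 0"
  proof (rule Lim_null_comparison[OF _ l1])
    show "eventually (\<lambda>k. norm ((norm (v k))^2) \<le> (norm (Dk k))^2 / \<kappa>^2 + (\<Sum>\<gamma>\<in>\<Gamma>0. (inner (v k) (\<phi> \<gamma>))^2)) sequentially"
      using ev by (rule eventually_mono) simp
  qed
  then show ?thesis by (rule sqrt_null[rotated]) simp
qed

lemma rho_exists:
  fixes pp :: "nat \<Rightarrow> real" and p :: "'i \<Rightarrow> real"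
  assumes part_cover: "(\<Union>i\<in>{1..n}. \<Gamma>s i) = UNIV"
    and pp_range0: "\<forall>i\<in>{1..n}. 1 \<le> pp i \<and> pp i \<le> 2"
    and p_def0: "\<forall>i\<in>{1..n}. \<forall>\<gamma>\<in>\<Gamma>s i. p \<gamma> = pp i"
  shows "\<exists>\<rho>>0. \<forall>\<gamma>. p \<gamma> = 1 \<or> (1 < p \<gamma> \<and> p \<gamma> \<le> 2 \<and> p \<gamma> - 1 \<ge> \<rho>)"
proof -
  have pp_range: "1 \<le> pp i \<and> pp i \<le> 2" if "i \<in> {1..n}" for i using pp_range0 that by blast
  have p_def: "p \<gamma> = pp i" if "i \<in> {1..n}" "\<gamma> \<in> \<Gamma>s i" for i \<gamma> using p_def0 that by blast
  define R where "R = insert 1 ((\<lambda>i. pp i - 1) ` {i \<in> {1..n}. pp i > 1})"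
  have finR: "finite R" unfolding R_def by simp
  have neR: "R \<noteq> {}" unfolding R_def by simp
  have pos: "Min R > 0" using finR neR by (subst Min_gr_iff) (auto simp: R_def)
  have "p \<gamma> = 1 \<or> (1 < p \<gamma> \<and> p \<gamma> \<le> 2 \<and> p \<gamma> - 1 \<ge> Min R)" for \<gamma>
  proof -
    obtain i where i: "i \<in> {1..n}" "\<gamma> \<in> \<Gamma>s i" using part_cover by blast
    have pg: "p \<gamma> = pp i" using p_def[OF i] .
    show ?thesis
    proof (cases "pp i = 1")
      case True then show ?thesis using pg by simp
    next
      case False
      then have gt: "pp i > 1" using pp_range[OF i(1)] by simp
      then have "pp i - 1 \<in> R" unfolding R_def using i(1) by auto
      then have "Min R \<le> pp i - 1" using finR by (rule Min_le[rotated])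
      then show ?thesis using pg gt pp_range[OF i(1)] by simp
    qed
  qed
  then show ?thesis using pos by blast
qed

theorem theorem6p15:
  fixes \<phi> :: "'i \<Rightarrow> 'a::{real_inner, complete_space}"
    and K :: "'a \<Rightarrow> 'b::{real_inner, complete_space}"
    and g :: 'b
    and n :: nat and \<Gamma>s :: "nat \<Rightarrow> 'i set" and pp :: "nat \<Rightarrow> real"
    and p w :: "'i \<Rightarrow> real" and c :: real
    and f :: "nat \<Rightarrow> 'a" and fstar :: 'a
  assumes onb: "orthonormal_basis \<phi>"
    and K_lin: "bounded_linear K" and K_norm: "onorm K < 1"
    and part_cover: "(\<Union>i\<in>{1..n}. \<Gamma>s i) = UNIV"
    and part_disj: "\<And>i j. i \<in> {1..n} \<Longrightarrow> j \<in> {1..n} \<Longrightarrow> i \<noteq> j \<Longrightarrow> \<Gamma>s i \<inter> \<Gamma>s j = {}"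
    and pp_range: "\<And>i. i \<in> {1..n} \<Longrightarrow> 1 \<le> pp i \<and> pp i \<le> 2"
    and p_def: "\<And>i \<gamma>. i \<in> {1..n} \<Longrightarrow> \<gamma> \<in> \<Gamma>s i \<Longrightarrow> p \<gamma> = pp i"
    and c_pos: "c > 0" and w_ge: "\<And>\<gamma>. w \<gamma> \<ge> c"
    and iter: "\<And>k. f (Suc k) = SWP \<phi> w p (f k + adjoint K (g - K (f k)))"
    and weak: "weakly_converges f fstar"
  shows "let u = (\<lambda>k. f k - fstar);
             h = fstar + adjoint K (g - K fstar)
         in ((\<lambda>k. norm (K (u k))) \<longlonglongrightarrow> 0)
          \<and> ((\<lambda>k. norm (SWP \<phi> w p (h + u k) - SWP \<phi> w p h - u k)) \<longlonglongrightarrow> 0)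
          \<and> (\<forall>a v. weakly_converges v 0 \<and>
                   ((\<lambda>k. norm (SWP \<phi> w p (a + v k) - SWP \<phi> w p a - v k)) \<longlonglongrightarrow> 0)
                   \<longrightarrow> ((\<lambda>k. norm (v k)) \<longlonglongrightarrow> 0))
          \<and> ((\<lambda>k. norm (u k)) \<longlonglongrightarrow> 0)"
proof -
  have w0: "w \<gamma> > 0" for \<gamma> by (rule less_le_trans[OF c_pos w_ge])
  obtain \<rho> where \<rho>: "\<rho> > 0" and pr: "\<And>\<gamma>. p \<gamma> = 1 \<or> (1 < p \<gamma> \<and> p \<gamma> \<le> 2 \<and> p \<gamma> - 1 \<ge> \<rho>)"
  proof -
    have a1: "\<forall>i\<in>{1..n}. 1 \<le> pp i \<and> pp i \<le> 2" using pp_range by blast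
    have a2: "\<forall>i\<in>{1..n}. \<forall>\<gamma>\<in>\<Gamma>s i. p \<gamma> = pp i" using p_def by blast
    show ?thesis using rho_exists[OF part_cover a1 a2] that by blast
  qed
  have p1: "p \<gamma> \<ge> 1" for \<gamma> using pr[of \<gamma>] by auto
  have adj: "inner (K x) y = inner x (adjoint K y)" for x y by (rule adjoint_ok[OF onb K_lin])
  have adj_diff: "adjoint K y - adjoint K z = adjoint K (y - z)" for y z
  proof -
    define e where "e = adjoint K y - adjoint K z - adjoint K (y - z)"
    have "inner x e = 0" for x
      unfolding e_def by (simp add: inner_diff_right adj[symmetric] inner_diff_right)
    then have "inner e e = 0" by blast
    then show ?thesis unfolding e_def by simp
  qed
  have onK: "onorm K < 1" "onorm K \<ge> 0" using K_norm onorm_pos_le[OF K_lin] by auto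
  have Knorm: "norm (K x) \<le> norm x" for x
  proof -
    have "norm (K x) \<le> onorm K * norm x" by (rule onorm[OF K_lin])
    also have "\<dots> \<le> 1 * norm x" using onK by (intro mult_right_mono) auto
    finally show ?thesis by simp
  qed
  have adj_bnd: "norm (adjoint K y) \<le> norm y" for y
  proof -
    define z where "z = adjoint K y"
    have "norm z * norm z = inner z z" using power2_norm_eq_inner[of z] by (simp add: power2_eq_square)
    also have "\<dots> = inner (K z) y" by (metis adj z_def)
    also have "\<dots> \<le> norm (K z) * norm y" by (rule order_trans[OF abs_ge_self Cauchy_Schwarz_ineq2])
    also have "\<dots> \<le> norm z * norm y" using Knorm[of z] by (intro mult_right_mono) auto
    finally have zz: "norm z * norm z \<le> norm z * norm y" .
    have "norm z \<le> norm y"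
    proof (cases "z = 0")
      case False
      then have "norm z > 0" by simp
      then show ?thesis using mult_left_le_imp_le[OF zz] by blast
    qed simp
    then show ?thesis by (simp add: z_def)
  qed
  define A where "A x = x - adjoint K (K x)" for x
  have A_bnd: "(norm (A x))^2 \<le> (norm x)^2 - (norm (K x))^2" for x
  proof -
    have i1: "inner x (adjoint K (K x)) = (norm (K x))^2"
      by (simp add: adj[symmetric] power2_norm_eq_inner)
    have i2: "(norm (adjoint K (K x)))^2 \<le> (norm (K x))^2"
      using adj_bnd[of "K x"] by (intro power_mono) auto
    have "(norm (A x))^2 = (norm x)^2 - 2 * inner x (adjoint K (K x)) + (norm (adjoint K (K x)))^2"
      unfolding A_def by (simp add: power2_norm_eq_inner inner_diff_left inner_diff_right inner_commute)
    then show ?thesis using i1 i2 by simp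
  qed
  have A_le: "norm (A x) \<le> norm x" for x
  proof -
    have "(norm (A x))^2 \<le> (norm x)^2" using A_bnd[of x] zero_le_power2[of "norm (K x)"] by linarith
    then show ?thesis using power2_le_imp_le by auto
  qed
  have KA: "norm (x - A x) \<le> norm (K x)" for x
    unfolding A_def using adj_bnd[of "K x"] by simp
  define N where "N = SWP \<phi> w p"
  define h where "h = fstar + adjoint K (g - K fstar)"
  define u where "u k = f k - fstar" for k
  have Klin: "K a - K b = K (a - b)" for a b using K_lin by (simp add: linear_simps)
  have step: "f (Suc k) = N (h + A (u k))" for k
  proof -
    have e1: "adjoint K (g - K fstar) - adjoint K (K (f k) - K fstar) = adjoint K (g - K (f k))"
      using adj_diff[of "g - K fstar" "K (f k) - K fstar"] by simp
    have "f k + adjoint K (g - K (f k)) = h + A (u k)"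
      unfolding h_def A_def u_def using e1 Klin[of "f k" fstar] by (simp add: algebra_simps)
    then show ?thesis using iter[of k] by (simp add: N_def)
  qed
  have weak_u: "(\<lambda>k. inner (u k) y) \<longlonglongrightarrow> 0" for y
  proof -
    have "(\<lambda>k. inner (f k) y - inner fstar y) \<longlonglongrightarrow> inner fstar y - inner fstar y"
      using weak unfolding weakly_converges_def by (intro tendsto_diff tendsto_const) blast
    then show ?thesis by (simp add: u_def inner_diff_left)
  qed
  have Nnonexp: "norm (N a - N b) \<le> norm (a - b)" for a b
    unfolding N_def by (rule SWP_nonexp[OF onb w0 p1])
  have Nfirm: "(norm (N a - N b))^2 \<le> inner (N a - N b) (a - b)" for a b
    unfolding N_def by (rule SWP_firm[OF onb w0 p1])
  have fixpt: "N h = fstar"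
  proof (rule ccontr)
    assume ne: "N h \<noteq> fstar"
    define q where "q = N h"
    define \<delta> where "\<delta> = (norm (fstar - q))^2"
    have d0: "\<delta> > 0" using ne by (simp add: \<delta>_def q_def)
    have ineq: "(norm (u (Suc k)))^2 + 2 * inner (u (Suc k)) (fstar - q) + \<delta> \<le> (norm (u k))^2" for k
    proof -
      have "norm (f (Suc k) - q) \<le> norm (u k)"
        using Nnonexp[of "h + A (u k)" h] A_le[of "u k"] by (simp add: step q_def)
      then have "(norm (f (Suc k) - q))^2 \<le> (norm (u k))^2" by (intro power_mono) auto
      moreover have "f (Suc k) - q = u (Suc k) + (fstar - q)" by (simp add: u_def)
      moreover have "(norm (u (Suc k) + (fstar - q)))^2 = (norm (u (Suc k)))^2 + 2 * inner (u (Suc k)) (fstar - q) + \<delta>"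
        unfolding \<delta>_def by (simp add: power2_norm_eq_inner inner_add_left inner_add_right inner_commute)
      ultimately show ?thesis by simp
    qed
    have "(\<lambda>k. inner (u (Suc k)) (fstar - q)) \<longlonglongrightarrow> 0" by (rule LIMSEQ_Suc[OF weak_u])
    then have "eventually (\<lambda>k. inner (u (Suc k)) (fstar - q) > -\<delta>/4) sequentially"
      using d0 by (intro order_tendstoD(1)) auto
    then obtain N0 where N0: "\<And>k. k \<ge> N0 \<Longrightarrow> inner (u (Suc k)) (fstar - q) > -\<delta>/4"
      unfolding eventually_sequentially by blast
    have dec: "(norm (u (Suc k)))^2 \<le> (norm (u k))^2 - \<delta>/2" if "k \<ge> N0" for k
      using ineq[of k] N0[OF that] by simp
    have ind: "(norm (u (N0 + j)))^2 \<le> (norm (u N0))^2 - real j * (\<delta>/2)" for j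
    proof (induction j)
      case 0 then show ?case by simp
    next
      case (Suc j)
      have "(norm (u (Suc (N0 + j))))^2 \<le> (norm (u (N0 + j)))^2 - \<delta>/2" by (rule dec) simp
      then show ?case using Suc.IH by (simp add: algebra_simps add_divide_distrib)
    qed
    obtain j where j: "(norm (u N0))^2 < real j * (\<delta>/2)"
      using ex_less_of_nat_mult[of "\<delta>/2" "(norm (u N0))^2"] d0 by auto
    have "(norm (u (N0 + j)))^2 < 0" using ind[of j] j by linarith
    then show False by simp
  qed
  have rec: "u (Suc k) = N (h + A (u k)) - N h" for k
    using step[of k] fixpt by (simp add: u_def)
  define b where "b k = (norm (u (Suc k) - A (u k)))^2 + (norm (K (u k)))^2" for k
  have dec: "(norm (u (Suc k)))^2 + b k \<le> (norm (u k))^2" for k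
  proof -
    have "(norm (u (Suc k)))^2 \<le> inner (u (Suc k)) (A (u k))"
      using Nfirm[of "h + A (u k)" h] by (simp add: rec)
    then have "(norm (u (Suc k)))^2 + (norm (u (Suc k) - A (u k)))^2 \<le> (norm (A (u k)))^2"
      by (rule firm_split)
    then show ?thesis using A_bnd[of "u k"] by (simp add: b_def)
  qed
  have b0: "b k \<ge> 0" for k by (simp add: b_def)
  have sumb': "(\<Sum>i<n. b i) + (norm (u n))^2 \<le> (norm (u 0))^2" for n
  proof (induction n)
    case 0 then show ?case by simp
  next
    case (Suc n)
    then show ?case using dec[of n] by simp
  qed
  have sumb: "(\<Sum>i<n. b i) \<le> (norm (u 0))^2" for n
    using sumb'[of n] by (smt (verit) zero_le_power2)
  have "summable b" by (rule summableI_nonneg_bounded[OF b0 sumb])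
  then have bl: "b \<longlonglongrightarrow> 0" by (rule summable_LIMSEQ_zero)
  have sb: "(\<lambda>k. sqrt (b k)) \<longlonglongrightarrow> 0" using tendsto_real_sqrt[OF bl] by simp
  have Ku_le: "norm (K (u k)) \<le> sqrt (b k)" for k
    by (rule real_le_rsqrt) (simp add: b_def)
  have UA_le: "norm (u (Suc k) - A (u k)) \<le> sqrt (b k)" for k
    by (rule real_le_rsqrt) (simp add: b_def)
  have partA: "(\<lambda>k. norm (K (u k))) \<longlonglongrightarrow> 0"
  proof (rule Lim_null_comparison[OF _ sb])
    show "eventually (\<lambda>k. norm (norm (K (u k))) \<le> sqrt (b k)) sequentially"
      by (rule always_eventually) (simp add: Ku_le)
  qed
  have Bbound: "norm (N (h + u k) - N h - u k) \<le> 3 * sqrt (b k)" for k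
  proof -
    define a1 where "a1 = N (h + u k) - N (h + A (u k))"
    define a2 where "a2 = u (Suc k) - A (u k)"
    define a3 where "a3 = u k - A (u k)"
    have eq: "N (h + u k) - N h - u k = a1 + a2 - a3"
      unfolding a1_def a2_def a3_def rec by (simp add: algebra_simps)
    have n1: "norm a1 \<le> sqrt (b k)"
    proof -
      have "norm a1 \<le> norm ((h + u k) - (h + A (u k)))" unfolding a1_def by (rule Nnonexp)
      also have "\<dots> = norm (u k - A (u k))" by simp
      also have "\<dots> \<le> norm (K (u k))" by (rule KA)
      finally show ?thesis using Ku_le[of k] by simp
    qed
    have n2: "norm a2 \<le> sqrt (b k)" unfolding a2_def by (rule UA_le)
    have n3: "norm a3 \<le> sqrt (b k)" unfolding a3_def using KA[of "u k"] Ku_le[of k] by simp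
    have "norm (a1 + a2 - a3) \<le> norm (a1 + a2) + norm a3" by (rule norm_triangle_ineq4)
    also have "\<dots> \<le> norm a1 + norm a2 + norm a3" using norm_triangle_ineq[of a1 a2] by simp
    finally show ?thesis using eq n1 n2 n3 by simp
  qed
  have partB: "(\<lambda>k. norm (N (h + u k) - N h - u k)) \<longlonglongrightarrow> 0"
  proof (rule Lim_null_comparison)
    show "eventually (\<lambda>k. norm (norm (N (h + u k) - N h - u k)) \<le> 3 * sqrt (b k)) sequentially"
      by (rule always_eventually) (simp add: Bbound)
    show "(\<lambda>k. 3 * sqrt (b k)) \<longlonglongrightarrow> 0" using tendsto_mult_right_zero[OF sb] by simp
  qed
  have partC: "\<forall>a v. weakly_converges v 0 \<and>
                   ((\<lambda>k. norm (SWP \<phi> w p (a + v k) - SWP \<phi> w p a - v k)) \<longlonglongrightarrow> 0)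
                   \<longrightarrow> ((\<lambda>k. norm (v k)) \<longlonglongrightarrow> 0)"
  proof (intro allI impI)
    fix a and v :: "nat \<Rightarrow> 'a"
    assume H: "weakly_converges v 0 \<and> (\<lambda>k. norm (SWP \<phi> w p (a + v k) - SWP \<phi> w p a - v k)) \<longlonglongrightarrow> 0"
    show "(\<lambda>k. norm (v k)) \<longlonglongrightarrow> 0"
      using H part_C[where w=w and p=p and \<phi>=\<phi> and c=c and \<rho>=\<rho> and v=v and a=a, OF onb c_pos w_ge \<rho> pr] by blast
  qed
  have wu: "weakly_converges u 0"
    unfolding weakly_converges_def using weak_u by simp
  have partD: "(\<lambda>k. norm (u k)) \<longlonglongrightarrow> 0"
    using partC[rule_format, of u h] wu partB unfolding N_def by blast
  show ?thesis
    unfolding Let_def u_def[symmetric] h_def[symmetric]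
    using partA partB partC partD unfolding N_def by (intro conjI)
qed

end
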